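(* Let $\mathcal H$ be a separable Hilbert space and $\rho$ a distribution on $(X,Y)\in\mathcal H\times\mathbb R$ with covariance operator $H=\mathbb E[X\otimes X]$, having eigenpairs $(\lambda_i,v_i)$ with $\lambda_i>0$. Assume the noiseless model: there is $\theta_*\in\mathcal H$ with $\langle\theta_*,X\rangle=Y$ $\rho$-a.s.; let $M_0=\theta_*\theta_*^\top$. Assume (capacity condition) there are $\alpha\in(0,1)$ and a finite $R_\alpha>0$ with $\mathbb E[\langle X,H^{-\alpha}X\rangle XX^\top]\preccurlyeq R_\alpha H$, and (source condition) there is $\beta>-1$ with $C_\beta:=\operatorname{tr}(H^{-\beta}M_0)=\sum_i\lambda_i^{-\beta}\langle v_i,\theta_*\rangle^2<+\infty$. Let $\xi_\alpha=\sum_{n\ge1}n^{-(1+\alpha)}$ and let $\gamma>0$ satisfy $\gamma^{1-\alpha}\le(32\xi_\alpha R_\alpha)^{-1}$. Let $(x_t,y_t)_{t\ge0}$ be i.i.d. from $\rho$ and run SGD $\theta_0=0$, $\theta_{t+1}=\theta_t-\gamma(\langle\theta_t,x_t\rangle-y_t)x_t$. Then for every $T\ge3$, $$\mathbb E\,\mathcal R(\theta_T)\le 2C_\beta\Big(\frac{1+\beta}{\gamma}\Big)^{1+\beta}\frac{1}{T^{1+\min(\alpha,\beta)}},$$ where $\mathcal R(\theta)=\tfrac12\mathbb E_\rho(\langle\theta,X\rangle-Y)^2$.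
   Context: $\preccurlyeq$ is the Loewner order; powers $H^{-\alpha}$, $H^{-\beta}$ are defined via the eigendecomposition of $H$. *)

theory Defs
  imports "HOL-Analysis.Analysis" "HOL-Probability.Probability"
begin

definition cov_op :: "('a::{real_inner,banach,second_countable_topology} \<times> real) measure \<Rightarrow> 'a \<Rightarrow> 'a" where
  "cov_op \<rho> u = (\<integral>z. (u \<bullet> fst z) *\<^sub>R fst z \<partial>\<rho>)"

definition risk :: "('a::real_inner \<times> real) measure \<Rightarrow> 'a \<Rightarrow> real" where
  "risk \<rho> \<theta> = (1/2) * (\<integral>z. (\<theta> \<bullet> fst z - snd z)\<^sup>2 \<partial>\<rho>)"

text \<open>Quadratic form <x, H^(-a) x> with H^(-a) defined through the eigendecomposition
  (v i, lam i), i in I, of H; value in [0, infinity].\<close>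
definition neg_pow_qf :: "'i set \<Rightarrow> ('i \<Rightarrow> real) \<Rightarrow> ('i \<Rightarrow> 'a::real_inner) \<Rightarrow> real \<Rightarrow> 'a \<Rightarrow> ennreal" where
  "neg_pow_qf I lam v a x = (\<Sum>\<^sub>\<infinity>i\<in>I. ennreal (lam i powr (-a) * (x \<bullet> v i)\<^sup>2))"

text \<open>Loewner order written out on quadratic forms:
  E[<X,H^(-a)X> X X^T] \<preccurlyeq> R H  iff  for all u,
  E[<X,H^(-a)X> <u,X>^2] \<le> R <u, H u> = R E[<u,X>^2].\<close>
definition capacity_cond :: "('a::real_inner \<times> real) measure \<Rightarrow> 'i set \<Rightarrow> ('i \<Rightarrow> real) \<Rightarrow> ('i \<Rightarrow> 'a) \<Rightarrow> real \<Rightarrow> real \<Rightarrow> bool" where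
  "capacity_cond \<rho> I lam v a R \<longleftrightarrow>
     (\<forall>u. (\<integral>\<^sup>+ z. neg_pow_qf I lam v a (fst z) * ennreal ((u \<bullet> fst z)\<^sup>2) \<partial>\<rho>)
            \<le> ennreal R * (\<integral>\<^sup>+ z. ennreal ((u \<bullet> fst z)\<^sup>2) \<partial>\<rho>))"

definition source_const :: "'i set \<Rightarrow> ('i \<Rightarrow> real) \<Rightarrow> ('i \<Rightarrow> 'a::real_inner) \<Rightarrow> real \<Rightarrow> 'a \<Rightarrow> real" where
  "source_const I lam v b \<theta> = (\<Sum>\<^sub>\<infinity>i\<in>I. lam i powr (-b) * (v i \<bullet> \<theta>)\<^sup>2)"

definition xi :: "real \<Rightarrow> real" where
  "xi a = (\<Sum>n. real (Suc n) powr (-(1 + a)))"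

fun sgd :: "real \<Rightarrow> (nat \<Rightarrow> 'a::real_inner \<times> real) \<Rightarrow> nat \<Rightarrow> 'a" where
  "sgd \<gamma> z 0 = 0"
| "sgd \<gamma> z (Suc t) = sgd \<gamma> z t - (\<gamma> * (sgd \<gamma> z t \<bullet> fst (z t) - snd (z t))) *\<^sub>R fst (z t)"

end

theory Submission
  imports Defs
begin


definition chainI :: "'i set \<Rightarrow> nat \<Rightarrow> 'i set" where
  "chainI I n = {i\<in>I. to_nat_on I i < n}"

lemma chainI_finite: "countable I \<Longrightarrow> finite (chainI I n)"
proof -
  assume c: "countable I"
  have "to_nat_on I ` chainI I n \<subseteq> {..<n}" by (auto simp: chainI_def)
  hence "finite (to_nat_on I ` chainI I n)" using finite_subset by blast
  moreover have "inj_on (to_nat_on I) (chainI I n)"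
    using inj_on_to_nat_on[OF c] by (rule inj_on_subset) (auto simp: chainI_def)
  ultimately show ?thesis using finite_imageD by blast
qed

lemma chainI_mono: "m \<le> n \<Longrightarrow> chainI I m \<subseteq> chainI I n"
  by (auto simp: chainI_def)

lemma chainI_sub: "chainI I n \<subseteq> I"
  by (auto simp: chainI_def)

lemma chainI_mem: "i \<in> chainI I n \<Longrightarrow> i \<in> I"
  by (simp add: chainI_def)

lemma chainI_cover:
  assumes "finite F" "F \<subseteq> I" shows "F \<subseteq> chainI I (Suc (\<Sum>x\<in>F. to_nat_on I x))"
proof
  fix x assume x: "x \<in> F"
  have "to_nat_on I x \<le> (\<Sum>x\<in>F. to_nat_on I x)" using member_le_sum[OF x _ assms(1), of "to_nat_on I"] by simp
  thus "x \<in> chainI I (Suc (\<Sum>x\<in>F. to_nat_on I x))" using x assms by (auto simp: chainI_def)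
qed

lemma infsum_chain:
  fixes f :: "'i \<Rightarrow> ennreal"
  assumes c: "countable I"
  shows "(\<Sum>\<^sub>\<infinity>i\<in>I. f i) = (SUP n. \<Sum>i\<in>chainI I n. f i)"
proof -
  have "(\<Sum>\<^sub>\<infinity>i\<in>I. f i) = (SUP F\<in>{F. finite F \<and> F\<subseteq>I}. sum f F)"
    by (rule nonneg_infsum_complete) simp
  also have "\<dots> = (SUP n. \<Sum>i\<in>chainI I n. f i)"
  proof (rule antisym)
    show "(SUP F\<in>{F. finite F \<and> F\<subseteq>I}. sum f F) \<le> (SUP n. \<Sum>i\<in>chainI I n. f i)"
    proof (rule SUP_least)
      fix F assume F: "F \<in> {F. finite F \<and> F\<subseteq>I}"
      let ?n = "Suc (\<Sum>x\<in>F. to_nat_on I x)"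
      have "sum f F \<le> sum f (chainI I ?n)"
        using F chainI_cover[of F I] chainI_finite[OF c] by (intro sum_mono2) auto
      also have "\<dots> \<le> (SUP n. \<Sum>i\<in>chainI I n. f i)" by (rule SUP_upper) simp
      finally show "sum f F \<le> (SUP n. \<Sum>i\<in>chainI I n. f i)" .
    qed
    show "(SUP n. \<Sum>i\<in>chainI I n. f i) \<le> (SUP F\<in>{F. finite F \<and> F\<subseteq>I}. sum f F)"
      by (rule SUP_least, rule SUP_upper) (auto simp: chainI_finite[OF c] chainI_sub)
  qed
  finally show ?thesis .
qed

lemma incseq_chainI_sum:
  fixes f :: "'i \<Rightarrow> ennreal"
  assumes c: "countable I"
  shows "incseq (\<lambda>n. \<Sum>i\<in>chainI I n. f i)"
  by (rule incseq_SucI, rule sum_mono2) (use chainI_finite[OF c] in \<open>auto simp: chainI_def\<close>)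

lemma infsum_ennreal_cmult:
  fixes f :: "'i \<Rightarrow> ennreal"
  assumes c: "countable I"
  shows "(\<Sum>\<^sub>\<infinity>i\<in>I. c * f i) = c * (\<Sum>\<^sub>\<infinity>i\<in>I. f i)"
  unfolding infsum_chain[OF c] by (simp add: SUP_mult_left_ennreal sum_distrib_left)

lemma infsum_ennreal_add:
  fixes f g :: "'i \<Rightarrow> ennreal"
  shows "(\<Sum>\<^sub>\<infinity>i\<in>I. f i + g i) = (\<Sum>\<^sub>\<infinity>i\<in>I. f i) + (\<Sum>\<^sub>\<infinity>i\<in>I. g i)"
  apply (rule infsum_add)
  apply (rule nonneg_summable_on_complete, rule zero_le)
  apply (rule nonneg_summable_on_complete, rule zero_le)
  done

lemma infsum_ennreal_mono:
  fixes f g :: "'i \<Rightarrow> ennreal"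
  assumes "\<And>i. i \<in> I \<Longrightarrow> f i \<le> g i"
  shows "(\<Sum>\<^sub>\<infinity>i\<in>I. f i) \<le> (\<Sum>\<^sub>\<infinity>i\<in>I. g i)"
  apply (rule infsum_mono)
  apply (rule nonneg_summable_on_complete, rule zero_le)
  apply (rule nonneg_summable_on_complete, rule zero_le)
  apply (rule assms, assumption)
  done

lemma le_infsum_ennreal:
  fixes f :: "'i \<Rightarrow> ennreal"
  assumes "j \<in> I" shows "f j \<le> (\<Sum>\<^sub>\<infinity>i\<in>I. f i)"
proof -
  have "(\<Sum>\<^sub>\<infinity>i\<in>I. f i) = (SUP F\<in>{F. finite F \<and> F\<subseteq>I}. sum f F)"
    by (rule nonneg_infsum_complete) simp
  moreover have "sum f {j} \<le> (SUP F\<in>{F. finite F \<and> F\<subseteq>I}. sum f F)"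
    by (rule SUP_upper) (use assms in auto)
  ultimately show ?thesis by simp
qed

lemma nn_integral_infsum:
  fixes f :: "'i \<Rightarrow> 'b \<Rightarrow> ennreal"
  assumes c: "countable I" and m: "\<And>i. i \<in> I \<Longrightarrow> f i \<in> borel_measurable M"
  shows "(\<integral>\<^sup>+x. (\<Sum>\<^sub>\<infinity>i\<in>I. f i x) \<partial>M) = (\<Sum>\<^sub>\<infinity>i\<in>I. \<integral>\<^sup>+x. f i x \<partial>M)"
proof -
  have "(\<integral>\<^sup>+x. (\<Sum>\<^sub>\<infinity>i\<in>I. f i x) \<partial>M) = (\<integral>\<^sup>+x. (SUP n. \<Sum>i\<in>chainI I n. f i x) \<partial>M)"
    by (simp add: infsum_chain[OF c])
  also have "\<dots> = (SUP n. \<integral>\<^sup>+x. (\<Sum>i\<in>chainI I n. f i x) \<partial>M)"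
  proof (rule nn_integral_monotone_convergence_SUP)
    show "incseq (\<lambda>n x. \<Sum>i\<in>chainI I n. f i x)"
      using incseq_chainI_sum[OF c] by (auto simp: incseq_def le_fun_def)
    show "\<And>n. (\<lambda>x. \<Sum>i\<in>chainI I n. f i x) \<in> borel_measurable M"
      using m by (intro borel_measurable_sum) (simp add: chainI_def)
  qed
  also have "\<dots> = (SUP n. \<Sum>i\<in>chainI I n. \<integral>\<^sup>+x. f i x \<partial>M)"
    using m by (intro SUP_cong refl nn_integral_sum) (simp add: chainI_def)
  also have "\<dots> = (\<Sum>\<^sub>\<infinity>i\<in>I. \<integral>\<^sup>+x. f i x \<partial>M)"
    by (simp add: infsum_chain[OF c])
  finally show ?thesis .
qed

lemma measurable_infsum_ennreal:
  fixes f :: "'i \<Rightarrow> 'b \<Rightarrow> ennreal"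
  assumes c: "countable I" and m: "\<And>i. i \<in> I \<Longrightarrow> f i \<in> borel_measurable M"
  shows "(\<lambda>x. \<Sum>\<^sub>\<infinity>i\<in>I. f i x) \<in> borel_measurable M"
  unfolding infsum_chain[OF c]
  using m by (intro borel_measurable_SUP borel_measurable_sum) (auto simp add: chainI_def)

lemma ennreal_infsum_real:
  fixes f :: "'i \<Rightarrow> real"
  assumes s: "f summable_on I" and nn: "\<And>i. i \<in> I \<Longrightarrow> f i \<ge> 0"
  shows "ennreal (infsum f I) = (\<Sum>\<^sub>\<infinity>i\<in>I. ennreal (f i))"
proof -
  have "ennreal (infsum f I) = (SUP F\<in>{F. finite F \<and> F \<subseteq> I}. (ennreal (sum f F)))"
    by (rule infsum_nonneg_is_SUPREMUM_ennreal[OF s nn])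
  also have "\<dots> = (SUP F\<in>{F. finite F \<and> F \<subseteq> I}. (\<Sum>i\<in>F. ennreal (f i)))"
  proof (intro SUP_cong refl)
    fix F assume "F \<in> {F. finite F \<and> F \<subseteq> I}"
    hence "\<And>i. i \<in> F \<Longrightarrow> 0 \<le> f i" using nn by blast
    thus "ennreal (sum f F) = (\<Sum>i\<in>F. ennreal (f i))" by (simp add: sum_ennreal)
  qed
  also have "\<dots> = (\<Sum>\<^sub>\<infinity>i\<in>I. ennreal (f i))"
    by (rule nonneg_infsum_complete[symmetric]) simp
  finally show ?thesis .
qed



lemma pow_exp_bound:
  fixes x q k :: real
  assumes x: "x > 0" and q: "q > 0" and k: "k > 0"
  shows "x powr q * exp (-2*x*k) \<le> (q / (2 * exp 1 * k)) powr q"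
proof -
  define y where "y = 2*k*x/q"
  have y: "y > 0" using x q k by (simp add: y_def)
  have "ln y \<le> y - 1" using y by (rule ln_le_minus_one)
  hence "q * ln y \<le> q * (y - 1)" using q by simp
  moreover have "ln y = ln 2 + ln k + ln x - ln q" using x q k by (simp add: y_def ln_mult ln_div)
  moreover have "q * y = 2*x*k" using q by (simp add: y_def)
  ultimately have *: "q * ln x - 2*x*k \<le> q * (ln q - ln 2 - 1 - ln k)"
    by (simp add: algebra_simps)
  have "x powr q * exp (-2*x*k) = exp (q * ln x - 2*x*k)"
    using x by (simp add: powr_def exp_diff exp_minus field_simps mult_exp_exp[symmetric] ac_simps)
  also have "\<dots> \<le> exp (q * (ln q - ln 2 - 1 - ln k))" using * by simp
  also have "\<dots> = (q / (2 * exp 1 * k)) powr q"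
    using q k by (simp add: powr_def ln_div ln_mult ac_simps)
  finally show ?thesis .
qed

lemma one_minus_pow_exp:
  fixes x :: real assumes "0 \<le> x" "x \<le> 1/2"
  shows "(1 - 2*x)^k \<le> exp (-2*x*k)"
proof -
  have "1 - 2*x \<le> exp (-2*x)" using exp_ge_add_one_self[of "-2*x"] by simp
  hence "(1 - 2*x)^k \<le> exp (-2*x)^k" using assms by (intro power_mono) auto
  also have "\<dots> = exp (-2*x*k)" by (simp add: exp_of_nat_mult[symmetric] ac_simps)
  finally show ?thesis .
qed

lemma pow_decay_bound:
  fixes x q :: real
  assumes x: "0 < x" "x \<le> 1/2" and q: "q > 0" and k: "k \<ge> 1"
  shows "x powr q * (1 - 2*x)^k \<le> (q / (2 * exp 1 * k)) powr q"
proof -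
  have "x powr q * (1 - 2*x)^k \<le> x powr q * exp (-2*x*k)"
    using one_minus_pow_exp[of x k] x by (intro mult_left_mono) auto
  also have "\<dots> \<le> (q / (2 * exp 1 * k)) powr q" using pow_exp_bound[of x q k] x q k by simp
  finally show ?thesis .
qed

lemma weight_bound:
  fixes x q :: real
  assumes x: "0 < x" "x \<le> 1/32" and q: "1 \<le> q" "q \<le> 2"
  shows "x powr q * (1 - 2*x)^k * real (k+1) powr q \<le> 1"
proof (cases "k = 0")
  case True
  have "x powr q \<le> 1" using x q by (intro powr_le1) auto
  thus ?thesis using True by simp
next
  case False
  hence k: "real k \<ge> 1" and k1: "k \<ge> 1" by simp_all
  have "x powr q * (1 - 2*x)^k * real (k+1) powr q \<le> (q / (2 * exp 1 * k)) powr q * real (k+1) powr q"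
    using pow_decay_bound[OF x(1) _ _ k1, of q] x q by (intro mult_right_mono) auto
  also have "\<dots> = (q * (k+1) / (2 * exp 1 * k)) powr q"
    using q k by (simp add: powr_mult[symmetric])
  also have "\<dots> \<le> 1"
  proof (rule powr_le1)
    have "(k+1) / (2*k) \<le> 1" using k by (simp add: field_simps)
    have e: "exp 1 \<ge> (2::real)" using exp_ge_add_one_self[of 1] by simp
    have "q * (k+1) / (2 * exp 1 * k) = q / exp 1 * ((k+1) / (2*k))" using k by (simp add: field_simps)
    also have "\<dots> \<le> q / exp 1 * 1"
      using \<open>(k+1) / (2*k) \<le> 1\<close> q by (intro mult_left_mono) auto
    also have "\<dots> \<le> 1" using e q by simp
    finally have "q * (k+1) / (2 * exp 1 * k) \<le> 1" .
    thus "\<bar>q * (k+1) / (2 * exp 1 * k)\<bar> \<le> 1" using q k by simp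
  qed (use q in auto)
  finally show ?thesis .
qed

lemma exp_small_le3: "(1/(32*p)) powr p \<le> (3::real)" if p: "p > 0" for p :: real
proof -
  have "ln (1/(32*p)) \<le> 1/(32*p) - 1" using p by (intro ln_le_minus_one) simp
  hence "p * ln (1/(32*p)) \<le> p * (1/(32*p) - 1)" using p by (intro mult_left_mono) auto
  also have "\<dots> = 1/32 - p" using p by (simp add: field_simps)
  also have "\<dots> \<le> 1" using p by simp
  finally have "(1/(32*p)) powr p \<le> exp 1" using p by (simp add: powr_def ac_simps)
  also have "exp 1 \<le> (3::real)" using exp_le by simp
  finally show ?thesis .
qed

lemma first_bound:
  fixes x p r :: real
  assumes x: "0 < x" "x \<le> 1/32" and p: "p > 0" and r: "0 < r" "r \<le> p"
  shows "x powr p * (1 - 2*x)^T * real (T+1) powr r \<le> 3 * p powr p"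
proof (cases "T = 0")
  case True
  have "x powr p \<le> (1/32) powr p" using x p by (intro powr_mono2) auto
  also have "(1/32) powr p = (1/(32*p)) powr p * p powr p"
    using p by (simp add: powr_mult[symmetric])
  also have "\<dots> \<le> 3 * p powr p" using exp_small_le3[OF p] by (intro mult_right_mono) auto
  finally show ?thesis using True by simp
next
  case False
  hence T1: "T \<ge> 1" and T: "real T \<ge> 1" by simp_all
  have A: "x powr p * (1 - 2*x)^T \<le> (p / (2 * exp 1 * T)) powr p"
    using pow_decay_bound[OF x(1) _ p T1] x by auto
  have "real (T+1) powr r \<le> (2 * T) powr r" using T r by (intro powr_mono2) auto
  also have "(2 * T) powr r \<le> (2 * T) powr p" using T r by (intro powr_mono) auto
  finally have B: "real (T+1) powr r \<le> (2 * T) powr p" .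
  have "x powr p * (1 - 2*x)^T * real (T+1) powr r \<le> (p / (2 * exp 1 * T)) powr p * (2 * T) powr p"
    using A B x by (intro mult_mono) auto
  also have "(p / (2 * exp 1 * T)) powr p * (2 * T) powr p = (p / exp 1) powr p"
    using T p by (simp add: powr_mult[symmetric])
  also have "\<dots> = p powr p / exp 1 powr p" using p by (simp add: powr_divide)
  also have "\<dots> \<le> p powr p / 1"
    using p by (intro divide_left_mono ge_one_powr_ge_zero) auto
  finally have "x powr p * (1 - 2*x)^T * real (T+1) powr r \<le> p powr p" by simp
  moreover have "p powr p \<le> 3 * p powr p" using p by simp
  ultimately show ?thesis by linarith
qed

lemma pair_term_aux:
  fixes a b r s :: real
  assumes ab: "1 \<le> b" "b \<le> a" and r: "0 < r" "r \<le> s"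
  shows "a powr (-s) * b powr (-r) * (a+b) powr r \<le> 2 powr r * (a powr (-s) + b powr (-s))"
proof -
  have "(a+b) powr r \<le> (2*a) powr r" using ab r by (intro powr_mono2) auto
  also have "\<dots> = 2 powr r * a powr r" using ab by (simp add: powr_mult)
  finally have 1: "(a+b) powr r \<le> 2 powr r * a powr r" .
  have "a powr (-s) * b powr (-r) * (a+b) powr r \<le> a powr (-s) * b powr (-r) * (2 powr r * a powr r)"
    using 1 ab by (intro mult_left_mono) auto
  also have "\<dots> = 2 powr r * (a powr (r - s) * b powr (-r))"
    using ab by (simp add: powr_diff powr_minus field_simps)
  also have "a powr (r - s) \<le> b powr (r - s)" using ab r by (intro powr_mono2') auto
  hence "2 powr r * (a powr (r - s) * b powr (-r)) \<le> 2 powr r * (b powr (r - s) * b powr (-r))"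
    by (intro mult_left_mono mult_right_mono) auto
  also have "b powr (r - s) * b powr (-r) = b powr (-s)" using ab by (simp add: powr_add[symmetric])
  also have "2 powr r * b powr (-s) \<le> 2 powr r * (a powr (-s) + b powr (-s))" by (intro mult_left_mono) auto
  finally show ?thesis .
qed

lemma pair_term:
  fixes a b r s :: real
  assumes ab: "1 \<le> a" "1 \<le> b" and r: "0 < r" "r \<le> s"
  shows "a powr (-s) * b powr (-r) \<le> 2 powr r * (a powr (-s) + b powr (-s)) / (a+b) powr r"
proof -
  have "a powr (-s) * b powr (-r) * (a+b) powr r \<le> 2 powr r * (a powr (-s) + b powr (-s))"
  proof (cases "b \<le> a")
    case True thus ?thesis using pair_term_aux[of b a r s] ab r by simp
  next
    case False
    have "b powr (-r) \<le> b powr (-s) * b powr (s - r)" using ab by (simp add: powr_add[symmetric])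
    have "a powr (-s) * b powr (-r) = b powr (-r) * a powr (-s)" by simp
    have *: "a powr (-s) * b powr (-r) * (a+b) powr r \<le> a powr (-s) * b powr (-r) * (2*b) powr r"
      using ab r False by (intro mult_left_mono powr_mono2) auto
    also have "\<dots> = 2 powr r * (a powr (-s) * (b powr r * b powr (-r)))"
      using ab by (simp add: powr_mult ac_simps)
    also have "b powr r * b powr (-r) = 1" using ab by (simp add: powr_add[symmetric])
    also have "2 powr r * (a powr (-s) * 1) \<le> 2 powr r * (a powr (-s) + b powr (-s))"
      by (intro mult_left_mono) auto
    finally show ?thesis .
  qed
  moreover have "(a+b) powr r > 0" using ab by simp
  ultimately show ?thesis by (simp add: pos_le_divide_eq)
qed

lemma xi_summable: "\<alpha> > 0 \<Longrightarrow> summable (\<lambda>n. real (Suc n) powr (-(1 + \<alpha>)))"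
proof -
  assume a: "\<alpha> > 0"
  have "summable (\<lambda>n. real n powr (-(1 + \<alpha>)))" using a by (subst summable_real_powr_iff) simp
  thus ?thesis by (subst summable_Suc_iff[where f="\<lambda>n. real n powr (-(1 + \<alpha>))"])
qed

lemma xi_partial: "\<alpha> > 0 \<Longrightarrow> (\<Sum>u<t. real (Suc u) powr (-(1 + \<alpha>))) \<le> xi \<alpha>"
  unfolding xi_def by (rule sum_le_suminf[OF xi_summable]) auto

lemma xi_ge1: "\<alpha> > 0 \<Longrightarrow> 1 \<le> xi \<alpha>"
  using xi_partial[of \<alpha> 1] by simp

lemma convolution_bound:
  fixes \<alpha> r :: real
  assumes a: "\<alpha> > 0" and r: "0 < r" "r \<le> 1 + \<alpha>" "r \<le> 2"
  shows "(\<Sum>u<t. real (t - u) powr (-(1+\<alpha>)) * real (u+1) powr (-r)) \<le> 8 * xi \<alpha> / real (t+1) powr r"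
proof -
  let ?s = "1 + \<alpha>"
  have "(\<Sum>u<t. real (t - u) powr (-?s) * real (u+1) powr (-r))
      \<le> (\<Sum>u<t. 2 powr r * (real (t - u) powr (-?s) + real (u+1) powr (-?s)) / real (t+1) powr r)"
  proof (rule sum_mono)
    fix u assume u: "u \<in> {..<t}"
    have e: "real (t - u) + real (u+1) = real (t+1)" using u by auto
    have "real (t - u) powr (-?s) * real (u+1) powr (-r)
        \<le> 2 powr r * (real (t - u) powr (-?s) + real (u+1) powr (-?s)) / (real (t - u) + real (u+1)) powr r"
      using u r by (intro pair_term) auto
    thus "real (t - u) powr (-?s) * real (u+1) powr (-r)
        \<le> 2 powr r * (real (t - u) powr (-?s) + real (u+1) powr (-?s)) / real (t+1) powr r"
      by (simp only: e)
  qed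
  also have "\<dots> = 2 powr r * ((\<Sum>u<t. real (t - u) powr (-?s)) + (\<Sum>u<t. real (u+1) powr (-?s))) / real (t+1) powr r"
    by (simp add: sum_divide_distrib[symmetric] sum_distrib_left[symmetric] sum.distrib)
  also have "(\<Sum>u<t. real (t - u) powr (-?s)) = (\<Sum>u<t. real (Suc u) powr (-?s))"
  proof -
    have "(\<Sum>u<t. real (Suc (t - Suc u)) powr (-?s)) = (\<Sum>u<t. real (Suc u) powr (-?s))"
      by (rule sum.nat_diff_reindex)
    moreover have "\<And>u. u \<in> {..<t} \<Longrightarrow> Suc (t - Suc u) = t - u" by auto
    ultimately show ?thesis by (metis (no_types, lifting) sum.cong)
  qed
  also have "(\<Sum>u<t. real (u+1) powr (-?s)) = (\<Sum>u<t. real (Suc u) powr (-?s))" by simp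
  also have "2 powr r * ((\<Sum>u<t. real (Suc u) powr (-?s)) + (\<Sum>u<t. real (Suc u) powr (-?s))) / real (t+1) powr r
     \<le> 2 powr r * (xi \<alpha> + xi \<alpha>) / real (t+1) powr r"
    using xi_partial[OF a, of t] by (intro divide_right_mono mult_left_mono add_mono) auto
  also have "\<dots> \<le> 4 * (2 * xi \<alpha>) / real (t+1) powr r"
  proof -
    have "2 powr r \<le> 2 powr 2" using r by (intro powr_mono) auto
    hence "2 powr r \<le> 4" by simp
    thus ?thesis using xi_ge1[OF a] by (intro divide_right_mono mult_right_mono) auto
  qed
  finally show ?thesis by simp
qed

lemma rec_bound:
  fixes a :: "nat \<Rightarrow> ennreal" and F G :: "nat \<Rightarrow> real" and c D r :: real
  assumes rec: "\<And>t. a t \<le> ennreal (F t) + (\<Sum>u<t. ennreal (c * G (t - Suc u)) * a u)"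
    and F0: "\<And>t. F t \<ge> 0" and G0: "\<And>k. G k \<ge> 0" and c0: "c \<ge> 0" and D0: "D \<ge> 0"
    and Fb: "\<And>t. F t \<le> 3/4 * D / real (t+1) powr r"
    and Gb: "\<And>t. (\<Sum>u<t. c * G (t - Suc u) * (D / real (u+1) powr r)) \<le> 1/4 * D / real (t+1) powr r"
  shows "a t \<le> ennreal (D / real (t+1) powr r)"
proof (induction t rule: less_induct)
  case (less t)
  have "a t \<le> ennreal (F t) + (\<Sum>u<t. ennreal (c * G (t - Suc u)) * a u)" by (rule rec)
  also have "\<dots> \<le> ennreal (F t) + (\<Sum>u<t. ennreal (c * G (t - Suc u)) * ennreal (D / real (u+1) powr r))"
  proof (intro add_left_mono sum_mono mult_left_mono)
    fix u assume "u \<in> {..<t}"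
    thus "a u \<le> ennreal (D / real (u+1) powr r)" using less by simp
  qed simp
  also have "\<dots> = ennreal (F t + (\<Sum>u<t. c * G (t - Suc u) * (D / real (u+1) powr r)))"
  proof -
    have "(\<Sum>u<t. ennreal (c * G (t - Suc u)) * ennreal (D / real (u+1) powr r))
        = (\<Sum>u<t. ennreal (c * G (t - Suc u) * (D / real (u+1) powr r)))"
    proof (intro sum.cong refl)
      fix u show "ennreal (c * G (t - Suc u)) * ennreal (D / real (u+1) powr r)
        = ennreal (c * G (t - Suc u) * (D / real (u+1) powr r))"
        by (rule ennreal_mult[symmetric]) (use c0 G0 D0 in auto)
    qed
    also have "\<dots> = ennreal (\<Sum>u<t. c * G (t - Suc u) * (D / real (u+1) powr r))"
      using c0 G0 D0 by (intro sum_ennreal) auto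
    finally have "(\<Sum>u<t. ennreal (c * G (t - Suc u)) * ennreal (D / real (u+1) powr r))
        = ennreal (\<Sum>u<t. c * G (t - Suc u) * (D / real (u+1) powr r))" .
    moreover have "ennreal (F t) + ennreal (\<Sum>u<t. c * G (t - Suc u) * (D / real (u+1) powr r))
        = ennreal (F t + (\<Sum>u<t. c * G (t - Suc u) * (D / real (u+1) powr r)))"
      by (rule ennreal_plus[symmetric]) (use F0 c0 G0 D0 in \<open>auto intro!: sum_nonneg\<close>)
    ultimately show ?thesis by simp
  qed
  also have "\<dots> \<le> ennreal (D / real (t+1) powr r)"
    using Fb[of t] Gb[of t] by (intro ennreal_leI) simp
  finally show ?case .
qed



locale sgd_setup =
  fixes \<rho> :: "('a::{real_inner,banach,second_countable_topology} \<times> real) measure"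
    and I :: "'i set" and lam :: "'i \<Rightarrow> real" and v :: "'i \<Rightarrow> 'a"
    and \<theta>s :: 'a and \<alpha> \<beta> R\<^sub>\<alpha> \<gamma> :: real
  assumes prob: "prob_space \<rho>"
    and sets_rho: "sets \<rho> = sets (borel :: ('a \<times> real) measure)"
    and second_moment: "integrable \<rho> (\<lambda>z. (norm (fst z))\<^sup>2)"
    and I_countable: "countable I"
    and v_orthonormal: "\<forall>i\<in>I. \<forall>j\<in>I. v i \<bullet> v j = (if i = j then 1 else 0)"
    and v_complete: "\<forall>x. ((\<lambda>i. (x \<bullet> v i) *\<^sub>R v i) has_sum x) I"
    and eigen: "\<forall>i\<in>I. cov_op \<rho> (v i) = lam i *\<^sub>R v i"
    and lam_pos: "\<forall>i\<in>I. lam i > 0"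
    and noiseless: "AE z in \<rho>. \<theta>s \<bullet> fst z = snd z"
    and alpha: "0 < \<alpha>" "\<alpha> < 1"
    and R_pos: "R\<^sub>\<alpha> > 0"
    and capacity: "capacity_cond \<rho> I lam v \<alpha> R\<^sub>\<alpha>"
    and beta: "\<beta> > -1"
    and source: "(\<lambda>i. lam i powr (-\<beta>) * (v i \<bullet> \<theta>s)\<^sup>2) summable_on I"
    and gamma_pos: "\<gamma> > 0"
    and gamma_le: "\<gamma> powr (1 - \<alpha>) \<le> 1 / (32 * xi \<alpha> * R\<^sub>\<alpha>)"
begin

interpretation P: prob_space \<rho> by (rule prob)

lemma meas_eq: "borel_measurable \<rho> = borel_measurable borel"
  by (rule measurable_cong_sets[OF sets_rho refl])

lemma meas_fst[measurable]: "fst \<in> borel_measurable \<rho>"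
  unfolding meas_eq by (intro borel_measurable_continuous_onI continuous_intros)

lemma meas_snd[measurable]: "snd \<in> borel_measurable \<rho>"
  unfolding meas_eq by (intro borel_measurable_continuous_onI continuous_intros)

lemma int_sq_inner: "integrable \<rho> (\<lambda>z. (u \<bullet> fst z) * (w \<bullet> fst z))"
proof (rule Bochner_Integration.integrable_bound)
  show "integrable \<rho> (\<lambda>z. norm u * norm w * (norm (fst z))\<^sup>2)"
    using second_moment by (intro integrable_mult_right)
  show "(\<lambda>z. (u \<bullet> fst z) * (w \<bullet> fst z)) \<in> borel_measurable \<rho>" by measurable
  show "AE z in \<rho>. norm ((u \<bullet> fst z) * (w \<bullet> fst z)) \<le> norm (norm u * norm w * (norm (fst z))\<^sup>2)"
  proof (rule AE_I2)
    fix z :: "'a \<times> real"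
    have "\<bar>u \<bullet> fst z\<bar> \<le> norm u * norm (fst z)" by (rule Cauchy_Schwarz_ineq2)
    moreover have "\<bar>w \<bullet> fst z\<bar> \<le> norm w * norm (fst z)" by (rule Cauchy_Schwarz_ineq2)
    ultimately have "\<bar>u \<bullet> fst z\<bar> * \<bar>w \<bullet> fst z\<bar> \<le> (norm u * norm (fst z)) * (norm w * norm (fst z))"
      by (intro mult_mono) auto
    thus "norm ((u \<bullet> fst z) * (w \<bullet> fst z)) \<le> norm (norm u * norm w * (norm (fst z))\<^sup>2)"
      by (simp add: abs_mult power2_eq_square ac_simps)
  qed
qed

lemma int_cov: "integrable \<rho> (\<lambda>z. (u \<bullet> fst z) *\<^sub>R fst z)"
proof (rule Bochner_Integration.integrable_bound)
  show "integrable \<rho> (\<lambda>z. norm u * (norm (fst z))\<^sup>2)"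
    using second_moment by (intro integrable_mult_right)
  show "(\<lambda>z. (u \<bullet> fst z) *\<^sub>R fst z) \<in> borel_measurable \<rho>" by measurable
  show "AE z in \<rho>. norm ((u \<bullet> fst z) *\<^sub>R fst z) \<le> norm (norm u * (norm (fst z))\<^sup>2)"
  proof (rule AE_I2)
    fix z :: "'a \<times> real"
    have "\<bar>u \<bullet> fst z\<bar> * norm (fst z) \<le> norm u * norm (fst z) * norm (fst z)"
      by (intro mult_right_mono Cauchy_Schwarz_ineq2) auto
    thus "norm ((u \<bullet> fst z) *\<^sub>R fst z) \<le> norm (norm u * (norm (fst z))\<^sup>2)"
      by (simp add: power2_eq_square ac_simps)
  qed
qed

lemma cov_inner: "w \<bullet> cov_op \<rho> u = (\<integral>z. (u \<bullet> fst z) * (w \<bullet> fst z) \<partial>\<rho>)"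
proof -
  have "w \<bullet> cov_op \<rho> u = (\<integral>z. w \<bullet> ((u \<bullet> fst z) *\<^sub>R fst z) \<partial>\<rho>)"
    unfolding cov_op_def by (rule integral_inner_right[symmetric]) (rule int_cov)
  thus ?thesis by (simp add: ac_simps)
qed

lemma cov_add: "cov_op \<rho> (a + b) = cov_op \<rho> a + cov_op \<rho> b"
  unfolding cov_op_def
  by (subst Bochner_Integration.integral_add[symmetric]) (auto intro!: int_cov Bochner_Integration.integral_cong simp: inner_add_left scaleR_add_left)

lemma cov_scale: "cov_op \<rho> (c *\<^sub>R a) = c *\<^sub>R cov_op \<rho> a"
  unfolding cov_op_def
  by (subst integral_scaleR_right[symmetric]) (auto intro!: Bochner_Integration.integral_cong)

lemma cov_bound: "norm (cov_op \<rho> u) \<le> norm u * (\<integral>z. (norm (fst z))\<^sup>2 \<partial>\<rho>)"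
proof -
  have "norm (cov_op \<rho> u) \<le> (\<integral>z. norm ((u \<bullet> fst z) *\<^sub>R fst z) \<partial>\<rho>)"
    unfolding cov_op_def by (rule integral_norm_bound)
  also have "\<dots> \<le> (\<integral>z. norm u * (norm (fst z))\<^sup>2 \<partial>\<rho>)"
  proof (rule integral_mono)
    show "integrable \<rho> (\<lambda>z. norm ((u \<bullet> fst z) *\<^sub>R fst z))" using int_cov by (rule integrable_norm)
    show "integrable \<rho> (\<lambda>z. norm u * (norm (fst z))\<^sup>2)"
      using second_moment by (intro integrable_mult_right)
    fix z :: "'a \<times> real"
    have "\<bar>u \<bullet> fst z\<bar> * norm (fst z) \<le> norm u * norm (fst z) * norm (fst z)"
      by (intro mult_right_mono Cauchy_Schwarz_ineq2) auto
    thus "norm ((u \<bullet> fst z) *\<^sub>R fst z) \<le> norm u * (norm (fst z))\<^sup>2"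
      by (simp add: power2_eq_square ac_simps)
  qed
  also have "\<dots> = norm u * (\<integral>z. (norm (fst z))\<^sup>2 \<partial>\<rho>)" by simp
  finally show ?thesis .
qed

lemma cov_bounded_linear: "bounded_linear (cov_op \<rho>)"
proof (rule bounded_linear_intro)
  show "\<And>a b. cov_op \<rho> (a + b) = cov_op \<rho> a + cov_op \<rho> b" by (rule cov_add)
  show "\<And>c a. cov_op \<rho> (c *\<^sub>R a) = c *\<^sub>R cov_op \<rho> a" by (rule cov_scale)
  show "\<And>u. norm (cov_op \<rho> u) \<le> norm u * (\<integral>z. (norm (fst z))\<^sup>2 \<partial>\<rho>)" by (rule cov_bound)
qed

lemma E_sq_has_sum: "((\<lambda>i. lam i * (u \<bullet> v i)\<^sup>2) has_sum (\<integral>z. (u \<bullet> fst z)\<^sup>2 \<partial>\<rho>)) I"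
proof -
  have "((\<lambda>i. cov_op \<rho> ((u \<bullet> v i) *\<^sub>R v i)) has_sum cov_op \<rho> u) I"
    using v_complete by (intro has_sum_bounded_linear[OF cov_bounded_linear]) auto
  hence "((\<lambda>i. u \<bullet> cov_op \<rho> ((u \<bullet> v i) *\<^sub>R v i)) has_sum u \<bullet> cov_op \<rho> u) I"
    by (intro has_sum_bounded_linear[OF bounded_linear_inner_right])
  moreover have "\<And>i. i \<in> I \<Longrightarrow> u \<bullet> cov_op \<rho> ((u \<bullet> v i) *\<^sub>R v i) = lam i * (u \<bullet> v i)\<^sup>2"
    using eigen by (simp add: cov_scale power2_eq_square ac_simps)
  moreover have "u \<bullet> cov_op \<rho> u = (\<integral>z. (u \<bullet> fst z)\<^sup>2 \<partial>\<rho>)"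
    by (simp add: cov_inner power2_eq_square)
  ultimately show ?thesis by (metis (no_types, lifting) has_sum_cong)
qed


definition Qf :: "('i \<Rightarrow> real) \<Rightarrow> 'a \<Rightarrow> ennreal" where
  "Qf w \<eta> = (\<Sum>\<^sub>\<infinity>i\<in>I. ennreal (w i * (\<eta> \<bullet> v i)\<^sup>2))"

lemma Qf_meas[measurable]: "(\<lambda>x. Qf w (f x)) \<in> borel_measurable M" if [measurable]: "f \<in> borel_measurable M"
  for f :: "'b \<Rightarrow> 'a" and M
  unfolding Qf_def by (rule measurable_infsum_ennreal[OF I_countable]) measurable

lemma Qf_lam: "Qf lam u = ennreal (\<integral>z. (u \<bullet> fst z)\<^sup>2 \<partial>\<rho>)"
proof -
  have "ennreal (\<integral>z. (u \<bullet> fst z)\<^sup>2 \<partial>\<rho>) = ennreal (\<Sum>\<^sub>\<infinity>i\<in>I. lam i * (u \<bullet> v i)\<^sup>2)"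
    using E_sq_has_sum[of u] by (simp add: infsumI)
  also have "\<dots> = Qf lam u" unfolding Qf_def
    using E_sq_has_sum[of u] lam_pos by (intro ennreal_infsum_real) (auto simp: summable_on_def less_imp_le)
  finally show ?thesis ..
qed

lemma int_sq: "integrable \<rho> (\<lambda>z. (u \<bullet> fst z)\<^sup>2)"
  using int_sq_inner[of u u] by (simp add: power2_eq_square)

lemma Qf_lam_nn: "Qf lam u = (\<integral>\<^sup>+z. ennreal ((u \<bullet> fst z)\<^sup>2) \<partial>\<rho>)"
  unfolding Qf_lam by (rule nn_integral_eq_integral[symmetric]) (auto simp: int_sq)

lemma E_v: "i \<in> I \<Longrightarrow> (\<integral>z. (v i \<bullet> fst z)\<^sup>2 \<partial>\<rho>) = lam i"
proof -
  assume i: "i \<in> I"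
  have "(\<integral>z. (v i \<bullet> fst z)\<^sup>2 \<partial>\<rho>) = v i \<bullet> cov_op \<rho> (v i)"
    by (simp add: cov_inner power2_eq_square)
  also have "\<dots> = lam i" using i eigen v_orthonormal by simp
  finally show ?thesis .
qed

lemma npq_ge: "i \<in> I \<Longrightarrow> ennreal (lam i powr (-\<alpha>) * (x \<bullet> v i)\<^sup>2) \<le> neg_pow_qf I lam v \<alpha> x"
  unfolding neg_pow_qf_def by (rule le_infsum_ennreal[where f="\<lambda>i. ennreal (lam i powr (-\<alpha>) * (x \<bullet> v i)\<^sup>2)"])

lemma npq_meas[measurable]: "(\<lambda>z. neg_pow_qf I lam v \<alpha> (fst z)) \<in> borel_measurable \<rho>"
  unfolding neg_pow_qf_def by (rule measurable_infsum_ennreal[OF I_countable]) measurable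

lemma lam_pow: "i \<in> I \<Longrightarrow> lam i powr (1 - \<alpha>) \<le> R\<^sub>\<alpha>"
proof -
  assume i: "i \<in> I"
  have li: "lam i > 0" using i lam_pos by auto
  let ?Z = "\<lambda>z. (v i \<bullet> fst z)\<^sup>2"
  have "(\<integral>\<^sup>+z. ennreal (lam i powr (-\<alpha>) * (?Z z)\<^sup>2) \<partial>\<rho>)
      \<le> (\<integral>\<^sup>+z. neg_pow_qf I lam v \<alpha> (fst z) * ennreal ((v i \<bullet> fst z)\<^sup>2) \<partial>\<rho>)"
  proof (rule nn_integral_mono)
    fix z :: "'a \<times> real"
    have "ennreal (lam i powr (-\<alpha>) * (?Z z)\<^sup>2) = ennreal (lam i powr (-\<alpha>) * (fst z \<bullet> v i)\<^sup>2) * ennreal (?Z z)"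
      by (subst ennreal_mult[symmetric]) (auto simp: power2_eq_square inner_commute)
    also have "\<dots> \<le> neg_pow_qf I lam v \<alpha> (fst z) * ennreal (?Z z)"
      by (intro mult_right_mono npq_ge i) auto
    finally show "ennreal (lam i powr (-\<alpha>) * (?Z z)\<^sup>2) \<le> neg_pow_qf I lam v \<alpha> (fst z) * ennreal ((v i \<bullet> fst z)\<^sup>2)" .
  qed
  also have "\<dots> \<le> ennreal R\<^sub>\<alpha> * (\<integral>\<^sup>+z. ennreal ((v i \<bullet> fst z)\<^sup>2) \<partial>\<rho>)"
    using capacity unfolding capacity_cond_def by blast
  also have "(\<integral>\<^sup>+z. ennreal ((v i \<bullet> fst z)\<^sup>2) \<partial>\<rho>) = ennreal (lam i)"
    using Qf_lam_nn[of "v i"] Qf_lam[of "v i"] E_v[OF i] by simp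
  also have "ennreal R\<^sub>\<alpha> * ennreal (lam i) = ennreal (R\<^sub>\<alpha> * lam i)"
    by (rule ennreal_mult[symmetric]) (use R_pos li in auto)
  finally have A: "(\<integral>\<^sup>+z. ennreal (lam i powr (-\<alpha>) * (?Z z)\<^sup>2) \<partial>\<rho>) \<le> ennreal (R\<^sub>\<alpha> * lam i)" .
  have fin: "(\<integral>\<^sup>+z. ennreal (lam i powr (-\<alpha>) * (?Z z)\<^sup>2) \<partial>\<rho>) < \<infinity>"
    by (rule order.strict_trans1[OF A]) simp
  have int4': "integrable \<rho> (\<lambda>z. lam i powr (-\<alpha>) * (?Z z)\<^sup>2)"
    by (rule integrableI_nonneg) (use fin in auto)
  hence int4: "integrable \<rho> (\<lambda>z. (?Z z)\<^sup>2)"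
    using li by (simp only: integrable_mult_left_iff) simp
  have "ennreal (\<integral>z. lam i powr (-\<alpha>) * (?Z z)\<^sup>2 \<partial>\<rho>) \<le> ennreal (R\<^sub>\<alpha> * lam i)"
    using A int4' by (subst nn_integral_eq_integral[symmetric]) auto
  hence B: "lam i powr (-\<alpha>) * (\<integral>z. (?Z z)\<^sup>2 \<partial>\<rho>) \<le> R\<^sub>\<alpha> * lam i"
    using R_pos li by (subst (asm) ennreal_le_iff) auto
  have "0 \<le> P.variance ?Z" by (rule integral_nonneg_AE) auto
  also have "P.variance ?Z = (\<integral>z. (?Z z)\<^sup>2 \<partial>\<rho>) - (\<integral>z. ?Z z \<partial>\<rho>)\<^sup>2"
    using int4 int_sq[of "v i"] by (subst P.variance_eq) auto
  finally have "(lam i)\<^sup>2 \<le> (\<integral>z. (?Z z)\<^sup>2 \<partial>\<rho>)" using E_v[OF i] by simp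
  hence "lam i powr (-\<alpha>) * (lam i)\<^sup>2 \<le> R\<^sub>\<alpha> * lam i"
    using B li by (meson dual_order.trans mult_left_mono powr_ge_zero)
  hence "lam i powr (-\<alpha>) * lam i \<le> R\<^sub>\<alpha>" using li by (simp add: power2_eq_square)
  moreover have "lam i powr (-\<alpha>) * lam i = lam i powr (1 - \<alpha>)"
  proof -
    have "lam i powr (1 - \<alpha>) = lam i powr (-\<alpha> + 1)" by simp
    also have "\<dots> = lam i powr (-\<alpha>) * lam i powr 1" by (rule powr_add)
    finally show ?thesis using li by simp
  qed
  ultimately show ?thesis by simp
qed

lemma lam_le: "i \<in> I \<Longrightarrow> \<gamma> * lam i \<le> 1/32"
proof (rule ccontr)
  assume i: "i \<in> I" and c: "\<not> \<gamma> * lam i \<le> 1/32"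
  have li: "lam i > 0" using i lam_pos by auto
  have xi1: "xi \<alpha> \<ge> 1" using xi_ge1 alpha by simp
  have "(\<gamma> * lam i) powr (1 - \<alpha>) = \<gamma> powr (1 - \<alpha>) * lam i powr (1 - \<alpha>)"
    using gamma_pos li by (simp add: powr_mult)
  also have "\<dots> \<le> 1 / (32 * xi \<alpha> * R\<^sub>\<alpha>) * R\<^sub>\<alpha>"
    using gamma_le lam_pow[OF i] xi1 R_pos by (intro mult_mono) auto
  also have "\<dots> = 1 / (32 * xi \<alpha>)" using R_pos by simp
  also have "\<dots> \<le> 1/32" using xi1 by (simp add: field_simps)
  finally have A: "(\<gamma> * lam i) powr (1 - \<alpha>) \<le> 1/32" .
  have "(1/32::real) \<le> (1/32) powr (1 - \<alpha>)"
    using powr_mono'[of "1 - \<alpha>" 1 "1/32::real"] alpha by simp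
  also have "\<dots> < (\<gamma> * lam i) powr (1 - \<alpha>)" using c alpha by (intro powr_less_mono2) auto
  finally show False using A by simp
qed


lemma one_minus_nonneg: "i \<in> I \<Longrightarrow> 0 \<le> 1 - 2*\<gamma>*lam i"
  using lam_le[of i] by simp

lemma step_i:
  assumes i: "i \<in> I" and w0: "0 \<le> w i"
  shows "(\<integral>\<^sup>+z. ennreal (w i * ((\<eta> - (\<gamma> * (\<eta> \<bullet> fst z)) *\<^sub>R fst z) \<bullet> v i)\<^sup>2) \<partial>\<rho>)
     \<le> ennreal (w i * (1 - 2*\<gamma>*lam i) * (\<eta> \<bullet> v i)\<^sup>2)
       + (\<integral>\<^sup>+z. ennreal (\<gamma>\<^sup>2 * w i * ((\<eta> \<bullet> fst z)\<^sup>2 * (fst z \<bullet> v i)\<^sup>2)) \<partial>\<rho>)"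
proof (cases "(\<integral>\<^sup>+z. ennreal (\<gamma>\<^sup>2 * w i * ((\<eta> \<bullet> fst z)\<^sup>2 * (fst z \<bullet> v i)\<^sup>2)) \<partial>\<rho>) = \<infinity>")
  case True then show ?thesis by simp
next
  case False
  define h where "h z = \<gamma>\<^sup>2 * w i * ((\<eta> \<bullet> fst z)\<^sup>2 * (fst z \<bullet> v i)\<^sup>2)" for z :: "'a \<times> real"
  define g where "g z = w i * ((\<eta> \<bullet> v i)\<^sup>2 - 2*\<gamma>*(\<eta> \<bullet> v i)*((v i \<bullet> fst z)*(\<eta> \<bullet> fst z)))" for z :: "'a \<times> real"
  have h0: "\<And>z. 0 \<le> h z" unfolding h_def using w0 by simp
  have hint: "integrable \<rho> h"
  proof (rule integrableI_nonneg)
    show "h \<in> borel_measurable \<rho>" unfolding h_def by measurable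
    show "AE x in \<rho>. 0 \<le> h x" using h0 by simp
    show "(\<integral>\<^sup>+x. ennreal (h x) \<partial>\<rho>) < \<infinity>" using False by (simp add: h_def top.not_eq_extremum)
  qed
  have "integrable \<rho> (\<lambda>z. (\<eta> \<bullet> v i)\<^sup>2 - 2*\<gamma>*(\<eta> \<bullet> v i)*((v i \<bullet> fst z)*(\<eta> \<bullet> fst z)))"
    by (rule Bochner_Integration.integrable_diff) (simp_all add: int_sq_inner)
  hence gint: "integrable \<rho> g" unfolding g_def by simp
  have eq: "\<And>z. w i * ((\<eta> - (\<gamma> * (\<eta> \<bullet> fst z)) *\<^sub>R fst z) \<bullet> v i)\<^sup>2 = g z + h z"
    by (simp add: g_def h_def algebra_simps power2_eq_square inner_diff_left inner_commute)
  have nn: "\<And>z. 0 \<le> g z + h z" using w0 by (simp add: eq[symmetric])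
  have "(\<integral>\<^sup>+z. ennreal (w i * ((\<eta> - (\<gamma> * (\<eta> \<bullet> fst z)) *\<^sub>R fst z) \<bullet> v i)\<^sup>2) \<partial>\<rho>)
      = (\<integral>\<^sup>+z. ennreal (g z + h z) \<partial>\<rho>)" by (simp only: eq)
  also have "\<dots> = ennreal (\<integral>z. g z + h z \<partial>\<rho>)"
    using gint hint nn by (intro nn_integral_eq_integral) auto
  also have "(\<integral>z. g z + h z \<partial>\<rho>) = (\<integral>z. g z \<partial>\<rho>) + (\<integral>z. h z \<partial>\<rho>)"
    using gint hint by (rule Bochner_Integration.integral_add)
  also have "(\<integral>z. g z \<partial>\<rho>) = w i * (1 - 2*\<gamma>*lam i) * (\<eta> \<bullet> v i)\<^sup>2"
  proof -
    have c: "(\<integral>z. (v i \<bullet> fst z)*(\<eta> \<bullet> fst z) \<partial>\<rho>) = lam i * (\<eta> \<bullet> v i)"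
      using cov_inner[of \<eta> "v i"] eigen i by simp
    have "(\<integral>z. g z \<partial>\<rho>) = w i * ((\<eta> \<bullet> v i)\<^sup>2 - 2*\<gamma>*(\<eta> \<bullet> v i)*(\<integral>z. (v i \<bullet> fst z)*(\<eta> \<bullet> fst z) \<partial>\<rho>))"
      unfolding g_def using int_sq_inner[of "v i" \<eta>] P.prob_space by (simp add: Bochner_Integration.integral_diff)
    also have "\<dots> = w i * (1 - 2*\<gamma>*lam i) * (\<eta> \<bullet> v i)\<^sup>2" by (simp only: c) (simp add: algebra_simps power2_eq_square)
    finally show ?thesis .
  qed
  also have "ennreal (w i * (1 - 2*\<gamma>*lam i) * (\<eta> \<bullet> v i)\<^sup>2 + (\<integral>z. h z \<partial>\<rho>))
      = ennreal (w i * (1 - 2*\<gamma>*lam i) * (\<eta> \<bullet> v i)\<^sup>2) + ennreal (\<integral>z. h z \<partial>\<rho>)"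
    by (rule ennreal_plus) (use w0 one_minus_nonneg[OF i] h0 in \<open>auto intro!: integral_nonneg_AE\<close>)
  also have "ennreal (\<integral>z. h z \<partial>\<rho>) = (\<integral>\<^sup>+z. ennreal (h z) \<partial>\<rho>)"
    using hint h0 by (intro nn_integral_eq_integral[symmetric]) auto
  finally show ?thesis by (simp add: h_def)
qed

lemma one_step:
  assumes w0: "\<And>i. i \<in> I \<Longrightarrow> 0 \<le> w i" and wK: "\<And>i. i \<in> I \<Longrightarrow> w i \<le> K * lam i powr (-\<alpha>)"
    and K: "K \<ge> 0"
  shows "(\<integral>\<^sup>+z. Qf w (\<eta> - (\<gamma> * (\<eta> \<bullet> fst z)) *\<^sub>R fst z) \<partial>\<rho>)
     \<le> Qf (\<lambda>i. w i * (1 - 2*\<gamma>*lam i)) \<eta> + ennreal (\<gamma>\<^sup>2 * K * R\<^sub>\<alpha>) * Qf lam \<eta>"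
proof -
  let ?h = "\<lambda>i z. ennreal (\<gamma>\<^sup>2 * w i * ((\<eta> \<bullet> fst z)\<^sup>2 * (fst z \<bullet> v i)\<^sup>2))"
  let ?npq = "\<lambda>z. neg_pow_qf I lam v \<alpha> (fst z)"
  have "(\<integral>\<^sup>+z. Qf w (\<eta> - (\<gamma> * (\<eta> \<bullet> fst z)) *\<^sub>R fst z) \<partial>\<rho>)
      = (\<Sum>\<^sub>\<infinity>i\<in>I. \<integral>\<^sup>+z. ennreal (w i * ((\<eta> - (\<gamma> * (\<eta> \<bullet> fst z)) *\<^sub>R fst z) \<bullet> v i)\<^sup>2) \<partial>\<rho>)"
    unfolding Qf_def by (rule nn_integral_infsum[OF I_countable]) measurable
  also have "\<dots> \<le> (\<Sum>\<^sub>\<infinity>i\<in>I. ennreal (w i * (1 - 2*\<gamma>*lam i) * (\<eta> \<bullet> v i)\<^sup>2) + (\<integral>\<^sup>+z. ?h i z \<partial>\<rho>))"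
    by (rule infsum_ennreal_mono) (rule step_i, auto intro: w0)
  also have "\<dots> = Qf (\<lambda>i. w i * (1 - 2*\<gamma>*lam i)) \<eta> + (\<Sum>\<^sub>\<infinity>i\<in>I. \<integral>\<^sup>+z. ?h i z \<partial>\<rho>)"
    unfolding Qf_def by (rule infsum_ennreal_add)
  also have "(\<Sum>\<^sub>\<infinity>i\<in>I. \<integral>\<^sup>+z. ?h i z \<partial>\<rho>) = (\<integral>\<^sup>+z. (\<Sum>\<^sub>\<infinity>i\<in>I. ?h i z) \<partial>\<rho>)"
    by (rule nn_integral_infsum[OF I_countable, symmetric]) measurable
  also have "\<dots> \<le> (\<integral>\<^sup>+z. ennreal (\<gamma>\<^sup>2 * K) * (?npq z * ennreal ((\<eta> \<bullet> fst z)\<^sup>2)) \<partial>\<rho>)"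
  proof (rule nn_integral_mono)
    fix z :: "'a \<times> real"
    have "(\<Sum>\<^sub>\<infinity>i\<in>I. ?h i z) \<le> (\<Sum>\<^sub>\<infinity>i\<in>I. ennreal (\<gamma>\<^sup>2 * K * (\<eta> \<bullet> fst z)\<^sup>2) * ennreal (lam i powr (-\<alpha>) * (fst z \<bullet> v i)\<^sup>2))"
    proof (rule infsum_ennreal_mono)
      fix i assume i: "i \<in> I"
      have "\<gamma>\<^sup>2 * w i * ((\<eta> \<bullet> fst z)\<^sup>2 * (fst z \<bullet> v i)\<^sup>2) \<le> \<gamma>\<^sup>2 * (K * lam i powr (-\<alpha>)) * ((\<eta> \<bullet> fst z)\<^sup>2 * (fst z \<bullet> v i)\<^sup>2)"
        using wK[OF i] by (intro mult_right_mono mult_left_mono) auto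
      also have "\<dots> = (\<gamma>\<^sup>2 * K * (\<eta> \<bullet> fst z)\<^sup>2) * (lam i powr (-\<alpha>) * (fst z \<bullet> v i)\<^sup>2)" by (simp add: ac_simps)
      finally have "?h i z \<le> ennreal ((\<gamma>\<^sup>2 * K * (\<eta> \<bullet> fst z)\<^sup>2) * (lam i powr (-\<alpha>) * (fst z \<bullet> v i)\<^sup>2))"
        by (rule ennreal_leI)
      also have "\<dots> = ennreal (\<gamma>\<^sup>2 * K * (\<eta> \<bullet> fst z)\<^sup>2) * ennreal (lam i powr (-\<alpha>) * (fst z \<bullet> v i)\<^sup>2)"
        by (rule ennreal_mult) (use K in auto)
      finally show "?h i z \<le> ennreal (\<gamma>\<^sup>2 * K * (\<eta> \<bullet> fst z)\<^sup>2) * ennreal (lam i powr (-\<alpha>) * (fst z \<bullet> v i)\<^sup>2)" .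
    qed
    also have "\<dots> = ennreal (\<gamma>\<^sup>2 * K * (\<eta> \<bullet> fst z)\<^sup>2) * ?npq z"
      unfolding neg_pow_qf_def by (rule infsum_ennreal_cmult[OF I_countable])
    also have "ennreal (\<gamma>\<^sup>2 * K * (\<eta> \<bullet> fst z)\<^sup>2) = ennreal (\<gamma>\<^sup>2 * K) * ennreal ((\<eta> \<bullet> fst z)\<^sup>2)"
      by (rule ennreal_mult) (use K in auto)
    finally show "(\<Sum>\<^sub>\<infinity>i\<in>I. ?h i z) \<le> ennreal (\<gamma>\<^sup>2 * K) * (?npq z * ennreal ((\<eta> \<bullet> fst z)\<^sup>2))"
      by (simp add: ac_simps)
  qed
  also have "\<dots> = ennreal (\<gamma>\<^sup>2 * K) * (\<integral>\<^sup>+z. ?npq z * ennreal ((\<eta> \<bullet> fst z)\<^sup>2) \<partial>\<rho>)"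
    by (rule nn_integral_cmult) measurable
  also have "\<dots> \<le> ennreal (\<gamma>\<^sup>2 * K) * (ennreal R\<^sub>\<alpha> * (\<integral>\<^sup>+z. ennreal ((\<eta> \<bullet> fst z)\<^sup>2) \<partial>\<rho>))"
    using capacity unfolding capacity_cond_def by (intro mult_left_mono) auto
  also have "\<dots> = ennreal (\<gamma>\<^sup>2 * K * R\<^sub>\<alpha>) * Qf lam \<eta>"
  proof -
    have "ennreal (\<gamma>\<^sup>2 * K) * ennreal R\<^sub>\<alpha> = ennreal (\<gamma>\<^sup>2 * K * R\<^sub>\<alpha>)"
      by (rule ennreal_mult[symmetric]) (use K R_pos in auto)
    thus ?thesis by (simp add: Qf_lam_nn mult.assoc[symmetric])
  qed
  finally show ?thesis by (simp add: add_left_mono)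
qed

lemma sgd_cong: "(\<And>j. j < t \<Longrightarrow> \<omega> j = \<omega>' j) \<Longrightarrow> sgd g \<omega> t = sgd g \<omega>' t"
  by (induction t) auto

abbreviation Pn :: "nat set \<Rightarrow> (nat \<Rightarrow> 'a \<times> real) measure" where
  "Pn J \<equiv> PiM J (\<lambda>_. \<rho>)"

lemma comp_fst_meas[measurable]: "t \<in> J \<Longrightarrow> (\<lambda>\<omega>. fst (\<omega> t)) \<in> borel_measurable (Pn J)"
proof -
  assume "t \<in> J"
  hence "(\<lambda>\<omega>. \<omega> t) \<in> measurable (Pn J) \<rho>" using measurable_component_singleton[of t J "\<lambda>_. \<rho>"] by simp
  from measurable_compose[OF this meas_fst] show ?thesis .
qed

lemma comp_snd_meas[measurable]: "t \<in> J \<Longrightarrow> (\<lambda>\<omega>. snd (\<omega> t)) \<in> borel_measurable (Pn J)"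
proof -
  assume "t \<in> J"
  hence "(\<lambda>\<omega>. \<omega> t) \<in> measurable (Pn J) \<rho>" using measurable_component_singleton[of t J "\<lambda>_. \<rho>"] by simp
  from measurable_compose[OF this meas_snd] show ?thesis .
qed

lemma sgd_meas: "{..<t} \<subseteq> J \<Longrightarrow> (\<lambda>\<omega>. sgd \<gamma> \<omega> t) \<in> borel_measurable (Pn J)"
proof (induction t)
  case 0 then show ?case by simp
next
  case (Suc t)
  hence [measurable]: "(\<lambda>\<omega>. sgd \<gamma> \<omega> t) \<in> borel_measurable (Pn J)" by (meson lessThan_subset_iff subset_trans le_SucI order_refl)
  have tJ: "t \<in> J" using Suc by auto
  note [measurable] = comp_fst_meas[OF tJ] comp_snd_meas[OF tJ]
  show ?case by simp measurable
qed

lemma sigma_rho: "product_sigma_finite (\<lambda>_::nat. \<rho>)"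
  unfolding product_sigma_finite_def using prob_space_imp_sigma_finite[OF prob] by simp

lemma step_prod:
  assumes F[measurable]: "F \<in> borel_measurable (borel :: 'a measure)"
  shows "(\<integral>\<^sup>+\<omega>. F (sgd \<gamma> \<omega> (Suc t)) \<partial>Pn {..<Suc t})
       = (\<integral>\<^sup>+\<omega>. (\<integral>\<^sup>+z. F (sgd \<gamma> \<omega> t - (\<gamma> * (sgd \<gamma> \<omega> t \<bullet> fst z - snd z)) *\<^sub>R fst z) \<partial>\<rho>) \<partial>Pn {..<t})"
proof -
  interpret PS: product_sigma_finite "\<lambda>_::nat. \<rho>" by (rule sigma_rho)
  have m: "(\<lambda>\<omega>. F (sgd \<gamma> \<omega> (Suc t))) \<in> borel_measurable (Pn (insert t {..<t}))"
  proof -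
    have "{..<Suc t} \<subseteq> insert t {..<t}" by auto
    from sgd_meas[OF this] show ?thesis by (rule measurable_compose[OF _ F])
  qed
  have "(\<integral>\<^sup>+\<omega>. F (sgd \<gamma> \<omega> (Suc t)) \<partial>Pn {..<Suc t}) = (\<integral>\<^sup>+\<omega>. F (sgd \<gamma> \<omega> (Suc t)) \<partial>Pn (insert t {..<t}))"
    by (simp add: lessThan_Suc)
  also have "\<dots> = (\<integral>\<^sup>+w. (\<integral>\<^sup>+z. F (sgd \<gamma> (w(t := z)) (Suc t)) \<partial>\<rho>) \<partial>Pn {..<t})"
    by (rule PS.product_nn_integral_insert[OF _ _ m]) auto
  also have "\<dots> = (\<integral>\<^sup>+\<omega>. (\<integral>\<^sup>+z. F (sgd \<gamma> \<omega> t - (\<gamma> * (sgd \<gamma> \<omega> t \<bullet> fst z - snd z)) *\<^sub>R fst z) \<partial>\<rho>) \<partial>Pn {..<t})"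
  proof (intro nn_integral_cong)
    fix w :: "nat \<Rightarrow> 'a \<times> real" and z :: "'a \<times> real"
    have "sgd \<gamma> (w(t := z)) t = sgd \<gamma> w t" by (rule sgd_cong) auto
    thus "F (sgd \<gamma> (w(t := z)) (Suc t)) = F (sgd \<gamma> w t - (\<gamma> * (sgd \<gamma> w t \<bullet> fst z - snd z)) *\<^sub>R fst z)"
      by simp
  qed
  finally show ?thesis .
qed

definition S :: "nat \<Rightarrow> ('i \<Rightarrow> real) \<Rightarrow> ennreal" where
  "S t w = (\<integral>\<^sup>+x. Qf w (sgd \<gamma> x t - \<theta>s) \<partial>Pn {..<t})"

lemma sgd_meas'[measurable]: "(\<lambda>x. sgd \<gamma> x t) \<in> borel_measurable (Pn {..<t})"
  by (rule sgd_meas) simp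

lemma S_step:
  assumes w0: "\<And>i. i \<in> I \<Longrightarrow> 0 \<le> w i" and wK: "\<And>i. i \<in> I \<Longrightarrow> w i \<le> K * lam i powr (-\<alpha>)"
    and K: "K \<ge> 0"
  shows "S (Suc t) w \<le> S t (\<lambda>i. w i * (1 - 2*\<gamma>*lam i)) + ennreal (\<gamma>\<^sup>2 * K * R\<^sub>\<alpha>) * S t lam"
proof -
  have Fm: "(\<lambda>\<theta>. Qf w (\<theta> - \<theta>s)) \<in> borel_measurable (borel :: 'a measure)"
    by (rule Qf_meas) measurable
  have "S (Suc t) w = (\<integral>\<^sup>+x. (\<integral>\<^sup>+z. Qf w (sgd \<gamma> x t - (\<gamma> * (sgd \<gamma> x t \<bullet> fst z - snd z)) *\<^sub>R fst z - \<theta>s) \<partial>\<rho>) \<partial>Pn {..<t})"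
    unfolding S_def by (rule step_prod[OF Fm])
  also have "\<dots> \<le> (\<integral>\<^sup>+x. Qf (\<lambda>i. w i * (1 - 2*\<gamma>*lam i)) (sgd \<gamma> x t - \<theta>s)
                      + ennreal (\<gamma>\<^sup>2 * K * R\<^sub>\<alpha>) * Qf lam (sgd \<gamma> x t - \<theta>s) \<partial>Pn {..<t})"
  proof (rule nn_integral_mono)
    fix x :: "nat \<Rightarrow> 'a \<times> real"
    let ?\<eta> = "sgd \<gamma> x t - \<theta>s"
    have "(\<integral>\<^sup>+z. Qf w (sgd \<gamma> x t - (\<gamma> * (sgd \<gamma> x t \<bullet> fst z - snd z)) *\<^sub>R fst z - \<theta>s) \<partial>\<rho>)
        = (\<integral>\<^sup>+z. Qf w (?\<eta> - (\<gamma> * (?\<eta> \<bullet> fst z)) *\<^sub>R fst z) \<partial>\<rho>)"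
    proof (rule nn_integral_cong_AE)
      show "AE z in \<rho>. Qf w (sgd \<gamma> x t - (\<gamma> * (sgd \<gamma> x t \<bullet> fst z - snd z)) *\<^sub>R fst z - \<theta>s)
          = Qf w (?\<eta> - (\<gamma> * (?\<eta> \<bullet> fst z)) *\<^sub>R fst z)"
        using noiseless by eventually_elim (simp add: inner_diff_left algebra_simps)
    qed
    also have "\<dots> \<le> Qf (\<lambda>i. w i * (1 - 2*\<gamma>*lam i)) ?\<eta> + ennreal (\<gamma>\<^sup>2 * K * R\<^sub>\<alpha>) * Qf lam ?\<eta>"
      by (rule one_step[OF w0 wK K])
    finally show "(\<integral>\<^sup>+z. Qf w (sgd \<gamma> x t - (\<gamma> * (sgd \<gamma> x t \<bullet> fst z - snd z)) *\<^sub>R fst z - \<theta>s) \<partial>\<rho>)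
        \<le> Qf (\<lambda>i. w i * (1 - 2*\<gamma>*lam i)) ?\<eta> + ennreal (\<gamma>\<^sup>2 * K * R\<^sub>\<alpha>) * Qf lam ?\<eta>" .
  qed
  also have "\<dots> = S t (\<lambda>i. w i * (1 - 2*\<gamma>*lam i)) + ennreal (\<gamma>\<^sup>2 * K * R\<^sub>\<alpha>) * S t lam"
    unfolding S_def by (subst nn_integral_add) (auto simp: nn_integral_cmult)
  finally show ?thesis .
qed

lemma scale_bound:
  fixes g l q y A :: real
  assumes g: "g > 0" and l: "l > 0" and h: "(g*l) powr q * y \<le> A"
  shows "l * y \<le> g powr (-q) * A * l powr (1 - q)"
proof -
  have "l * y = l powr (1 - q) * g powr (-q) * ((g*l) powr q * y)"
  proof -
    have "(g*l) powr q = g powr q * l powr q" using g l by (simp add: powr_mult)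
    moreover have "g powr (-q) * g powr q = 1" using g by (simp add: powr_add[symmetric])
    moreover have "l powr (1 - q) * l powr q = l" using l by (simp add: powr_add[symmetric])
    ultimately show ?thesis by (simp add: algebra_simps)
  qed
  also have "\<dots> \<le> l powr (1 - q) * g powr (-q) * A"
    using h by (intro mult_left_mono) auto
  finally show ?thesis by (simp add: ac_simps)
qed

definition G :: "nat \<Rightarrow> real" where
  "G k = \<gamma> powr (-(1+\<alpha>)) * (1 / real (k+1) powr (1+\<alpha>))"

lemma G_nonneg: "G k \<ge> 0" by (simp add: G_def)

lemma weight_cond: "i \<in> I \<Longrightarrow> lam i * (1 - 2*\<gamma>*lam i)^k \<le> G k * lam i powr (-\<alpha>)"
proof -
  assume i: "i \<in> I"
  have li: "lam i > 0" using i lam_pos by auto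
  have x: "0 < \<gamma> * lam i" "\<gamma> * lam i \<le> 1/32" using gamma_pos li lam_le[OF i] by auto
  have "(\<gamma> * lam i) powr (1+\<alpha>) * (1 - 2*(\<gamma> * lam i))^k * real (k+1) powr (1+\<alpha>) \<le> 1"
    using weight_bound[OF x, of "1+\<alpha>" k] alpha by auto
  hence "(\<gamma> * lam i) powr (1+\<alpha>) * (1 - 2*\<gamma>*lam i)^k \<le> 1 / real (k+1) powr (1+\<alpha>)"
    by (simp add: pos_le_divide_eq mult.assoc)
  from scale_bound[OF gamma_pos li this]
  show ?thesis by (simp add: G_def)
qed

lemma S_chain:
  "S n (\<lambda>i. lam i * (1 - 2*\<gamma>*lam i)^k)
     \<le> S 0 (\<lambda>i. lam i * (1 - 2*\<gamma>*lam i)^(k+n)) + (\<Sum>u<n. ennreal (\<gamma>\<^sup>2 * R\<^sub>\<alpha> * G (k+n-1-u)) * S u lam)"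
proof (induction n arbitrary: k)
  case 0 then show ?case by simp
next
  case (Suc n)
  have "S (Suc n) (\<lambda>i. lam i * (1 - 2*\<gamma>*lam i)^k)
      \<le> S n (\<lambda>i. lam i * (1 - 2*\<gamma>*lam i)^k * (1 - 2*\<gamma>*lam i)) + ennreal (\<gamma>\<^sup>2 * G k * R\<^sub>\<alpha>) * S n lam"
  proof (rule S_step)
    fix i assume i: "i \<in> I"
    show "0 \<le> lam i * (1 - 2*\<gamma>*lam i)^k" using lam_pos one_minus_nonneg[OF i] i by auto
    show "lam i * (1 - 2*\<gamma>*lam i)^k \<le> G k * lam i powr (-\<alpha>)" by (rule weight_cond[OF i])
  qed (rule G_nonneg)
  also have "(\<lambda>i. lam i * (1 - 2*\<gamma>*lam i)^k * (1 - 2*\<gamma>*lam i)) = (\<lambda>i. lam i * (1 - 2*\<gamma>*lam i)^(Suc k))"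
    by (simp add: ac_simps)
  also have "S n (\<lambda>i. lam i * (1 - 2*\<gamma>*lam i)^(Suc k))
      \<le> S 0 (\<lambda>i. lam i * (1 - 2*\<gamma>*lam i)^(Suc k+n)) + (\<Sum>u<n. ennreal (\<gamma>\<^sup>2 * R\<^sub>\<alpha> * G (Suc k+n-1-u)) * S u lam)"
    by (rule Suc.IH)
  finally have "S (Suc n) (\<lambda>i. lam i * (1 - 2*\<gamma>*lam i)^k)
      \<le> S 0 (\<lambda>i. lam i * (1 - 2*\<gamma>*lam i)^(Suc k+n)) + (\<Sum>u<n. ennreal (\<gamma>\<^sup>2 * R\<^sub>\<alpha> * G (Suc k+n-1-u)) * S u lam)
        + ennreal (\<gamma>\<^sup>2 * G k * R\<^sub>\<alpha>) * S n lam" by (simp add: add_right_mono)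
  also have "\<dots> = S 0 (\<lambda>i. lam i * (1 - 2*\<gamma>*lam i)^(k + Suc n)) + (\<Sum>u<Suc n. ennreal (\<gamma>\<^sup>2 * R\<^sub>\<alpha> * G (k + Suc n-1-u)) * S u lam)"
  proof -
    have "(\<Sum>u<n. ennreal (\<gamma>\<^sup>2 * R\<^sub>\<alpha> * G (Suc k+n-1-u)) * S u lam) = (\<Sum>u<n. ennreal (\<gamma>\<^sup>2 * R\<^sub>\<alpha> * G (k + Suc n-1-u)) * S u lam)"
      by simp
    thus ?thesis by (simp add: ac_simps)
  qed
  finally show ?case .
qed

lemma S0: "S 0 w = Qf w (- \<theta>s)"
proof -
  have "prob_space (Pn {..<0})" by (rule prob_space_PiM) (use prob in auto)
  thus ?thesis unfolding S_def by (simp add: prob_space.emeasure_space_1)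
qed

abbreviation C where "C \<equiv> source_const I lam v \<beta> \<theta>s"
abbreviation p where "p \<equiv> 1 + \<beta>"
abbreviation r where "r \<equiv> 1 + min \<alpha> \<beta>"

lemma C_nonneg: "C \<ge> 0"
  unfolding source_const_def by (rule infsum_nonneg) auto

lemma first_term: "S 0 (\<lambda>i. lam i * (1 - 2*\<gamma>*lam i)^t) \<le> ennreal (C * (\<gamma> powr (-p) * (3 * p powr p / real (t+1) powr r)))"
proof -
  define M where "M = \<gamma> powr (-p) * (3 * p powr p / real (t+1) powr r)"
  have M0: "M \<ge> 0" unfolding M_def by simp
  have "S 0 (\<lambda>i. lam i * (1 - 2*\<gamma>*lam i)^t) = (\<Sum>\<^sub>\<infinity>i\<in>I. ennreal (lam i * (1 - 2*\<gamma>*lam i)^t * ((- \<theta>s) \<bullet> v i)\<^sup>2))"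
    by (simp add: S0 Qf_def)
  also have "\<dots> \<le> (\<Sum>\<^sub>\<infinity>i\<in>I. ennreal M * ennreal (lam i powr (-\<beta>) * (v i \<bullet> \<theta>s)\<^sup>2))"
  proof (rule infsum_ennreal_mono)
    fix i assume i: "i \<in> I"
    have li: "lam i > 0" using i lam_pos by auto
    have x: "0 < \<gamma> * lam i" "\<gamma> * lam i \<le> 1/32" using gamma_pos li lam_le[OF i] by auto
    have "(\<gamma> * lam i) powr p * (1 - 2*(\<gamma> * lam i))^t * real (t+1) powr r \<le> 3 * p powr p"
      using first_bound[OF x, of p r t] beta alpha by auto
    hence "(\<gamma> * lam i) powr p * (1 - 2*\<gamma>*lam i)^t \<le> 3 * p powr p / real (t+1) powr r"
      by (simp add: pos_le_divide_eq mult.assoc)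
    from scale_bound[OF gamma_pos li this]
    have "lam i * (1 - 2*\<gamma>*lam i)^t \<le> M * lam i powr (-\<beta>)" by (simp add: M_def)
    hence "lam i * (1 - 2*\<gamma>*lam i)^t * ((- \<theta>s) \<bullet> v i)\<^sup>2 \<le> M * (lam i powr (-\<beta>) * (v i \<bullet> \<theta>s)\<^sup>2)"
      by (simp add: inner_commute mult.assoc[symmetric] mult_right_mono)
    hence "ennreal (lam i * (1 - 2*\<gamma>*lam i)^t * ((- \<theta>s) \<bullet> v i)\<^sup>2) \<le> ennreal (M * (lam i powr (-\<beta>) * (v i \<bullet> \<theta>s)\<^sup>2))"
      by (rule ennreal_leI)
    also have "\<dots> = ennreal M * ennreal (lam i powr (-\<beta>) * (v i \<bullet> \<theta>s)\<^sup>2)"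
      by (rule ennreal_mult) (use M0 in auto)
    finally show "ennreal (lam i * (1 - 2*\<gamma>*lam i)^t * ((- \<theta>s) \<bullet> v i)\<^sup>2) \<le> ennreal M * ennreal (lam i powr (-\<beta>) * (v i \<bullet> \<theta>s)\<^sup>2)" .
  qed
  also have "\<dots> = ennreal M * (\<Sum>\<^sub>\<infinity>i\<in>I. ennreal (lam i powr (-\<beta>) * (v i \<bullet> \<theta>s)\<^sup>2))"
    by (rule infsum_ennreal_cmult[OF I_countable])
  also have "(\<Sum>\<^sub>\<infinity>i\<in>I. ennreal (lam i powr (-\<beta>) * (v i \<bullet> \<theta>s)\<^sup>2)) = ennreal C"
    unfolding source_const_def by (rule ennreal_infsum_real[OF source, symmetric]) auto
  also have "ennreal M * ennreal C = ennreal (C * M)"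
    by (subst ennreal_mult[symmetric]) (use M0 C_nonneg in \<open>auto simp: ac_simps\<close>)
  finally show ?thesis by (simp add: M_def)
qed

definition D where "D = 4 * C * (p / \<gamma>) powr p"

lemma a_bound: "S t lam \<le> ennreal (D / real (t+1) powr r)"
proof (rule rec_bound[where a="\<lambda>t. S t lam" and F="\<lambda>t. C * (\<gamma> powr (-p) * (3 * p powr p / real (t+1) powr r))"
      and G=G and c="\<gamma>\<^sup>2 * R\<^sub>\<alpha>"])
  fix t
  have "S t lam = S t (\<lambda>i. lam i * (1 - 2*\<gamma>*lam i)^0)" by simp
  also have "\<dots> \<le> S 0 (\<lambda>i. lam i * (1 - 2*\<gamma>*lam i)^(0+t)) + (\<Sum>u<t. ennreal (\<gamma>\<^sup>2 * R\<^sub>\<alpha> * G (0+t-1-u)) * S u lam)"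
    by (rule S_chain)
  also have "\<dots> \<le> ennreal (C * (\<gamma> powr (-p) * (3 * p powr p / real (t+1) powr r))) + (\<Sum>u<t. ennreal (\<gamma>\<^sup>2 * R\<^sub>\<alpha> * G (t - Suc u)) * S u lam)"
    using first_term[of t] by (simp add: add_right_mono)
  finally show "S t lam \<le> ennreal (C * (\<gamma> powr (-p) * (3 * p powr p / real (t+1) powr r))) + (\<Sum>u<t. ennreal (\<gamma>\<^sup>2 * R\<^sub>\<alpha> * G (t - Suc u)) * S u lam)" .
next
  fix t show "0 \<le> C * (\<gamma> powr (-p) * (3 * p powr p / real (t+1) powr r))" using C_nonneg by simp
next
  fix k show "0 \<le> G k" by (rule G_nonneg)
next
  show "0 \<le> \<gamma>\<^sup>2 * R\<^sub>\<alpha>" using R_pos by simp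
next
  show "0 \<le> D" unfolding D_def using C_nonneg by simp
next
  fix t
  have "(p / \<gamma>) powr p = p powr p * \<gamma> powr (-p)" by (simp only: powr_divide powr_minus_divide) simp
  thus "C * (\<gamma> powr (-p) * (3 * p powr p / real (t+1) powr r)) \<le> 3/4 * D / real (t+1) powr r"
    unfolding D_def by (simp add: field_simps)
next
  fix t
  have xi1: "xi \<alpha> \<ge> 1" using xi_ge1 alpha by simp
  have "(\<Sum>u<t. \<gamma>\<^sup>2 * R\<^sub>\<alpha> * G (t - Suc u) * (D / real (u+1) powr r))
      = \<gamma>\<^sup>2 * \<gamma> powr (-(1+\<alpha>)) * R\<^sub>\<alpha> * D * (\<Sum>u<t. real (t - u) powr (-(1+\<alpha>)) * real (u+1) powr (-r))"
  proof -
    have "\<And>u. u < t \<Longrightarrow> \<gamma>\<^sup>2 * R\<^sub>\<alpha> * G (t - Suc u) * (D / real (u+1) powr r)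
        = \<gamma>\<^sup>2 * \<gamma> powr (-(1+\<alpha>)) * R\<^sub>\<alpha> * D * (real (t - u) powr (-(1+\<alpha>)) * real (u+1) powr (-r))"
    proof -
      fix u assume u: "u < t"
      have "Suc (t - Suc u) = t - u" using u by simp
      hence "G (t - Suc u) = \<gamma> powr (-(1+\<alpha>)) * real (t - u) powr (-(1+\<alpha>))"
        unfolding G_def by (simp only: powr_minus_divide) simp
      moreover have "D / real (u+1) powr r = D * real (u+1) powr (-r)"
        by (simp only: powr_minus_divide) simp
      ultimately show "\<gamma>\<^sup>2 * R\<^sub>\<alpha> * G (t - Suc u) * (D / real (u+1) powr r)
        = \<gamma>\<^sup>2 * \<gamma> powr (-(1+\<alpha>)) * R\<^sub>\<alpha> * D * (real (t - u) powr (-(1+\<alpha>)) * real (u+1) powr (-r))"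
        by (simp only:) (simp add: ac_simps)
    qed
    hence "(\<Sum>u<t. \<gamma>\<^sup>2 * R\<^sub>\<alpha> * G (t - Suc u) * (D / real (u+1) powr r))
        = (\<Sum>u<t. \<gamma>\<^sup>2 * \<gamma> powr (-(1+\<alpha>)) * R\<^sub>\<alpha> * D * (real (t - u) powr (-(1+\<alpha>)) * real (u+1) powr (-r)))"
      by (intro sum.cong) auto
    thus ?thesis by (simp add: sum_distrib_left)
  qed
  also have "\<gamma>\<^sup>2 * \<gamma> powr (-(1+\<alpha>)) = \<gamma> powr (1 - \<alpha>)"
  proof -
    have "\<gamma>\<^sup>2 = \<gamma> powr 2" using gamma_pos by (simp add: powr_realpow)
    hence "\<gamma>\<^sup>2 * \<gamma> powr (-(1+\<alpha>)) = \<gamma> powr (2 + (-(1+\<alpha>)))" by (simp only: powr_add)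
    also have "2 + (-(1+\<alpha>)) = 1 - \<alpha>" by simp
    finally show ?thesis .
  qed
  also have "\<gamma> powr (1 - \<alpha>) * R\<^sub>\<alpha> * D * (\<Sum>u<t. real (t - u) powr (-(1+\<alpha>)) * real (u+1) powr (-r))
      \<le> \<gamma> powr (1 - \<alpha>) * R\<^sub>\<alpha> * D * (8 * xi \<alpha> / real (t+1) powr r)"
  proof (rule mult_left_mono)
    show "(\<Sum>u<t. real (t - u) powr (-(1+\<alpha>)) * real (u+1) powr (-r)) \<le> 8 * xi \<alpha> / real (t+1) powr r"
      by (rule convolution_bound) (use alpha beta in auto)
    show "0 \<le> \<gamma> powr (1 - \<alpha>) * R\<^sub>\<alpha> * D" using R_pos C_nonneg by (simp add: D_def)
  qed
  also have "\<dots> = (\<gamma> powr (1 - \<alpha>) * (32 * xi \<alpha> * R\<^sub>\<alpha>)) * (1/4 * D / real (t+1) powr r)"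
    by (simp add: field_simps)
  also have "\<dots> \<le> 1 * (1/4 * D / real (t+1) powr r)"
  proof (rule mult_right_mono)
    have "\<gamma> powr (1 - \<alpha>) * (32 * xi \<alpha> * R\<^sub>\<alpha>) \<le> 1 / (32 * xi \<alpha> * R\<^sub>\<alpha>) * (32 * xi \<alpha> * R\<^sub>\<alpha>)"
      using gamma_le xi1 R_pos by (intro mult_right_mono) auto
    thus "\<gamma> powr (1 - \<alpha>) * (32 * xi \<alpha> * R\<^sub>\<alpha>) \<le> 1" using xi1 R_pos by simp
    show "0 \<le> 1/4 * D / real (t+1) powr r" using C_nonneg by (simp add: D_def)
  qed
  finally show "(\<Sum>u<t. \<gamma>\<^sup>2 * R\<^sub>\<alpha> * G (t - Suc u) * (D / real (u+1) powr r)) \<le> 1/4 * D / real (t+1) powr r"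
    by simp
qed

lemma risk_eq: "ennreal (risk \<rho> \<theta>) = ennreal (1/2) * Qf lam (\<theta> - \<theta>s)"
proof -
  have "risk \<rho> \<theta> = 1/2 * (\<integral>z. ((\<theta> - \<theta>s) \<bullet> fst z)\<^sup>2 \<partial>\<rho>)"
    unfolding risk_def
    by (rule arg_cong[where f="\<lambda>x. 1/2 * x"], rule integral_cong_AE) (use noiseless in \<open>auto simp: inner_diff_left\<close>)
  hence "ennreal (risk \<rho> \<theta>) = ennreal (1/2 * (\<integral>z. ((\<theta> - \<theta>s) \<bullet> fst z)\<^sup>2 \<partial>\<rho>))" by (rule arg_cong)
  also have "\<dots> = ennreal (1/2) * ennreal (\<integral>z. ((\<theta> - \<theta>s) \<bullet> fst z)\<^sup>2 \<partial>\<rho>)"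
    by (rule ennreal_mult) (auto intro: integral_nonneg_AE)
  finally show ?thesis by (simp only: Qf_lam)
qed

lemma main:
  assumes T: "T \<ge> 1"
  shows "(\<integral>\<^sup>+x. ennreal (risk \<rho> (sgd \<gamma> x T)) \<partial>(PiM UNIV (\<lambda>_::nat. \<rho>)))
           \<le> ennreal (2 * C * (p / \<gamma>) powr p / real T powr r)"
proof -
  interpret PP: product_prob_space "\<lambda>_::nat. \<rho>" "UNIV :: nat set"
    unfolding product_prob_space_def product_prob_space_axioms_def using sigma_rho prob by auto
  let ?g = "\<lambda>x. ennreal (1/2) * Qf lam (sgd \<gamma> x T - \<theta>s)"
  have gm: "?g \<in> borel_measurable (Pn {..<T})" by measurable
  have "(\<integral>\<^sup>+x. ennreal (risk \<rho> (sgd \<gamma> x T)) \<partial>(PiM UNIV (\<lambda>_::nat. \<rho>)))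
      = (\<integral>\<^sup>+x. ?g (restrict x {..<T}) \<partial>(PiM UNIV (\<lambda>_::nat. \<rho>)))"
  proof (rule nn_integral_cong)
    fix x :: "nat \<Rightarrow> 'a \<times> real"
    have "sgd \<gamma> (restrict x {..<T}) T = sgd \<gamma> x T" by (rule sgd_cong) simp
    thus "ennreal (risk \<rho> (sgd \<gamma> x T)) = ?g (restrict x {..<T})" by (simp add: risk_eq)
  qed
  also have "\<dots> = (\<integral>\<^sup>+x. ?g x \<partial>distr (PiM UNIV (\<lambda>_::nat. \<rho>)) (Pn {..<T}) (\<lambda>x. restrict x {..<T}))"
  proof -
    have rm: "(\<lambda>x. restrict x {..<T}) \<in> measurable (PiM UNIV (\<lambda>_::nat. \<rho>)) (Pn {..<T})"
      by (rule measurable_restrict_subset) simp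
    have "?g \<in> borel_measurable (distr (PiM UNIV (\<lambda>_::nat. \<rho>)) (Pn {..<T}) (\<lambda>x. restrict x {..<T}))"
      using gm by simp
    from nn_integral_distr[OF rm this] show ?thesis by simp
  qed
  also have "\<dots> = (\<integral>\<^sup>+x. ?g x \<partial>Pn {..<T})"
    by (subst PP.distr_PiM_restrict_finite) auto
  also have "\<dots> = ennreal (1/2) * S T lam"
    unfolding S_def by (rule nn_integral_cmult) measurable
  also have "\<dots> \<le> ennreal (1/2) * ennreal (D / real (T+1) powr r)"
    by (intro mult_left_mono a_bound) auto
  also have "\<dots> = ennreal (1/2 * (D / real (T+1) powr r))"
    by (rule ennreal_mult[symmetric]) (use C_nonneg in \<open>auto simp: D_def\<close>)
  also have "\<dots> \<le> ennreal (2 * C * (p / \<gamma>) powr p / real T powr r)"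
  proof (rule ennreal_leI)
    have "real T powr r \<le> real (T+1) powr r" using T alpha beta by (intro powr_mono2) auto
    moreover have "real T powr r > 0" using T by simp
    moreover have "0 \<le> 2 * C * (p / \<gamma>) powr p" using C_nonneg by simp
    ultimately have "2 * C * (p / \<gamma>) powr p / real (T+1) powr r \<le> 2 * C * (p / \<gamma>) powr p / real T powr r"
      by (intro divide_left_mono) auto
    thus "1/2 * (D / real (T+1) powr r) \<le> 2 * C * (p / \<gamma>) powr p / real T powr r"
      by (simp add: D_def)
  qed
  finally show ?thesis .
qed
end

theorem theorem3:
  fixes \<rho> :: "('a::{real_inner,banach,second_countable_topology} \<times> real) measure"
    and I :: "'i set" and lam :: "'i \<Rightarrow> real" and v :: "'i \<Rightarrow> 'a"
    and \<theta>s :: 'a and \<alpha> \<beta> R\<^sub>\<alpha> \<gamma> :: real and T :: nat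
  assumes prob: "prob_space \<rho>"
    and sets_rho: "sets \<rho> = sets (borel :: ('a \<times> real) measure)"
    and second_moment: "integrable \<rho> (\<lambda>z. (norm (fst z))\<^sup>2)"
    and I_countable: "countable I"
    and v_orthonormal: "\<forall>i\<in>I. \<forall>j\<in>I. v i \<bullet> v j = (if i = j then 1 else 0)"
    and v_complete: "\<forall>x. ((\<lambda>i. (x \<bullet> v i) *\<^sub>R v i) has_sum x) I"
    and eigen: "\<forall>i\<in>I. cov_op \<rho> (v i) = lam i *\<^sub>R v i"
    and lam_pos: "\<forall>i\<in>I. lam i > 0"
    and noiseless: "AE z in \<rho>. \<theta>s \<bullet> fst z = snd z"
    and alpha: "0 < \<alpha>" "\<alpha> < 1"
    and R_pos: "R\<^sub>\<alpha> > 0"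
    and capacity: "capacity_cond \<rho> I lam v \<alpha> R\<^sub>\<alpha>"
    and beta: "\<beta> > -1"
    and source: "(\<lambda>i. lam i powr (-\<beta>) * (v i \<bullet> \<theta>s)\<^sup>2) summable_on I"
    and gamma_pos: "\<gamma> > 0"
    and gamma_le: "\<gamma> powr (1 - \<alpha>) \<le> 1 / (32 * xi \<alpha> * R\<^sub>\<alpha>)"
    and T: "T \<ge> 3"
  shows "(\<integral>\<^sup>+ \<omega>. ennreal (risk \<rho> (sgd \<gamma> \<omega> T)) \<partial>(PiM UNIV (\<lambda>_::nat. \<rho>)))
           \<le> ennreal (2 * source_const I lam v \<beta> \<theta>s * ((1 + \<beta>) / \<gamma>) powr (1 + \<beta>)
                      / real T powr (1 + min \<alpha> \<beta>))"
proof -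
  interpret sgd_setup \<rho> I lam v \<theta>s \<alpha> \<beta> R\<^sub>\<alpha> \<gamma>
    using prob sets_rho second_moment I_countable v_orthonormal v_complete eigen lam_pos noiseless
      alpha R_pos capacity beta source gamma_pos gamma_le
    by (rule sgd_setup.intro)
  show ?thesis using main[of T] T by simp
qed

end
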